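(* Fix a nonempty $A\subseteq S$ and $w\in A$, and let $E_0$ be the event $\{\tau_{\mathcal E_N^w}=\tau_{\mathcal E_N(A)}\}$. Let $x,y\in S$ be distinct with $r(x,y)+r(y,x)>0$. Then there exists $C>0$, independent of $N$ and $i$, such that for all $i\in\{1,\dots,N-1\}$, $$\Big|\mathbb P_{\zeta_i^{x,y}}[E_0]-\frac{r(x,y)}{r(x,y)+r(y,x)}\mathbb P_{\zeta_{i+1}^{x,y}}[E_0]-\frac{r(y,x)}{r(x,y)+r(y,x)}\mathbb P_{\zeta_{i-1}^{x,y}}[E_0]\Big|\le C\frac{d_NN}{i(N-i)}.$$
   Context: $S$ is finite; $r:S\times S\to[0,\infty)$, $r(x,x)=0$, are the rates of an irreducible continuous-time Markov chain on $S$. $\mathcal H_N=\{\eta\in\{0,1,2,\dots\}^S:\sum_x\eta_x=N\}$; $\sigma^{x,y}\eta$ moves one particle from $x$ to $y$ (if $\eta_x\ge1$; else $\sigma^{x,y}\eta=\eta$). With $d_N>0$, $d_N\to0$, the inclusion process is the Markov chain on $\mathcal H_N$ with generator $(\mathcal L_NF)(\eta)=\sum_{x\ne y}\eta_x(d_N+\eta_y)r(x,y)\{F(\sigma^{x,y}\eta)-F(\eta)\}$; $\mathbb P_\eta$ its law from $\eta$; $\tau_{\mathcal C}$ the hitting time of $\mathcal C\subseteq\mathcal H_N$. $\xi_N^z$: all $N$ particles at $z$; $\mathcal E_N^z=\{\xi_N^z\}$, $\mathcal E_N(A)=\bigcup_{z\in A}\mathcal E_N^z$. For $0\le i\le N$,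 $\zeta_i^{x,y}$ is the configuration with $N-i$ particles at $x$, $i$ at $y$, and none elsewhere. *)

theory Defs
  imports "HOL-Analysis.Analysis"
begin

definition irreducible_rates :: "('s \<Rightarrow> 's \<Rightarrow> real) \<Rightarrow> bool" where
  "irreducible_rates r \<longleftrightarrow> (\<forall>a b. (a, b) \<in> {(u, v). r u v > 0}\<^sup>*)"

definition sigma :: "'s \<Rightarrow> 's \<Rightarrow> ('s \<Rightarrow> nat) \<Rightarrow> ('s \<Rightarrow> nat)" where
  "sigma x y \<eta> = (if 1 \<le> \<eta> x then \<eta>(x := \<eta> x - 1, y := \<eta> y + 1) else \<eta>)"

text \<open>Jump rate eta -> sigma x y eta of the inclusion process with parameter dN.\<close>
definition incl_rate :: "real \<Rightarrow> ('s \<Rightarrow> 's \<Rightarrow> real) \<Rightarrow> 's \<Rightarrow> 's \<Rightarrow> ('s \<Rightarrow> nat) \<Rightarrow> real" where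
  "incl_rate dN r x y \<eta> = real (\<eta> x) * (dN + real (\<eta> y)) * r x y"

definition incl_total_rate :: "real \<Rightarrow> ('s::finite \<Rightarrow> 's \<Rightarrow> real) \<Rightarrow> ('s \<Rightarrow> nat) \<Rightarrow> real" where
  "incl_total_rate dN r \<eta> = (\<Sum>(x, y)\<in>{(x, y). x \<noteq> y}. incl_rate dN r x y \<eta>)"

text \<open>hit_within dN r B g n eta: probability that the (embedded jump chain of the)
  inclusion process started at eta hits B within n jumps and the configuration at
  the hitting time of B is g.\<close>
fun hit_within :: "real \<Rightarrow> ('s::finite \<Rightarrow> 's \<Rightarrow> real) \<Rightarrow> ('s \<Rightarrow> nat) set \<Rightarrow> ('s \<Rightarrow> nat)
    \<Rightarrow> nat \<Rightarrow> ('s \<Rightarrow> nat) \<Rightarrow> real" where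
  "hit_within dN r B g 0 \<eta> = (if \<eta> \<in> B \<and> \<eta> = g then 1 else 0)"
| "hit_within dN r B g (Suc n) \<eta> =
     (if \<eta> \<in> B then (if \<eta> = g then 1 else 0)
      else (\<Sum>(x, y)\<in>{(x, y). x \<noteq> y}.
              incl_rate dN r x y \<eta> / incl_total_rate dN r \<eta> * hit_within dN r B g n (sigma x y \<eta>)))"

text \<open>P_eta[ tau_{B} < infinity and X(tau_B) = g ] as the (monotone) limit.\<close>
definition hit_at_prob :: "real \<Rightarrow> ('s::finite \<Rightarrow> 's \<Rightarrow> real) \<Rightarrow> ('s \<Rightarrow> nat) set \<Rightarrow> ('s \<Rightarrow> nat)
    \<Rightarrow> ('s \<Rightarrow> nat) \<Rightarrow> real" where
  "hit_at_prob dN r B g \<eta> = lim (\<lambda>n. hit_within dN r B g n \<eta>)"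

definition xi :: "nat \<Rightarrow> 's \<Rightarrow> ('s \<Rightarrow> nat)" where
  "xi N z = (\<lambda>u. if u = z then N else 0)"

definition zeta :: "nat \<Rightarrow> nat \<Rightarrow> 's \<Rightarrow> 's \<Rightarrow> ('s \<Rightarrow> nat)" where
  "zeta N i x y = (\<lambda>u. if u = x then N - i else if u = y then i else 0)"

text \<open>P_eta[E_0], E_0 = {tau_{E_N^w} = tau_{E_N(A)}}: the process reaches E_N(A) first at xi_N^w.\<close>
definition E0_prob :: "(nat \<Rightarrow> real) \<Rightarrow> ('s::finite \<Rightarrow> 's \<Rightarrow> real) \<Rightarrow> nat \<Rightarrow> 's set \<Rightarrow> 's
    \<Rightarrow> ('s \<Rightarrow> nat) \<Rightarrow> real" where
  "E0_prob d r N A w \<eta> = hit_at_prob (d N) r (xi N ` A) (xi N w) \<eta>"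

end

theory Submission imports Defs begin


lemma rate_nonneg: assumes "\<forall>a b. 0 \<le> r a b" "0 \<le> dN"
  shows "0 \<le> incl_rate dN r p q \<eta>"
  using assms unfolding incl_rate_def by simp

lemma total_nonneg: assumes "\<forall>a b. 0 \<le> r a b" "0 \<le> dN"
  shows "0 \<le> incl_total_rate dN r \<eta>"
  unfolding incl_total_rate_def by (rule sum_nonneg) (use rate_nonneg[OF assms] in auto)

lemma prob_sum_le1: assumes "\<forall>a b. 0 \<le> r a b" "0 \<le> dN"
  shows "(\<Sum>(p, q)\<in>{(p, q). p \<noteq> q}. incl_rate dN r p q \<eta> / incl_total_rate dN r \<eta>) \<le> 1"
proof -
  have "(\<Sum>(p, q)\<in>{(p, q). p \<noteq> q}. incl_rate dN r p q \<eta> / incl_total_rate dN r \<eta>)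
     = incl_total_rate dN r \<eta> / incl_total_rate dN r \<eta>"
    unfolding incl_total_rate_def sum_divide_distrib by (simp add: case_prod_unfold)
  also have "\<dots> \<le> 1" by (cases "incl_total_rate dN r \<eta> = 0") auto
  finally show ?thesis .
qed

lemma hw_bounds: assumes "\<forall>a b. 0 \<le> r a b" "0 \<le> dN"
  shows "0 \<le> hit_within dN r B g n \<eta> \<and> hit_within dN r B g n \<eta> \<le> 1"
proof (induction n arbitrary: \<eta>)
  case 0 then show ?case by simp
next
  case (Suc n)
  let ?P = "{(p, q). p \<noteq> q}"
  let ?w = "\<lambda>p q. incl_rate dN r p q \<eta> / incl_total_rate dN r \<eta>"
  have w0: "0 \<le> ?w p q" for p q using rate_nonneg[OF assms] total_nonneg[OF assms] by simp
  have f1: "0 \<le> ?w p q * hit_within dN r B g n (sigma p q \<eta>)" for p q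
    using w0 Suc by (intro mult_nonneg_nonneg) auto
  have f2: "?w p q * hit_within dN r B g n (sigma p q \<eta>) \<le> ?w p q" for p q
    using w0 Suc by (intro mult_left_le) auto
  have "0 \<le> (\<Sum>(p, q)\<in>?P. ?w p q * hit_within dN r B g n (sigma p q \<eta>))"
    unfolding case_prod_unfold by (rule sum_nonneg) (rule f1)
  moreover have "(\<Sum>(p, q)\<in>?P. ?w p q * hit_within dN r B g n (sigma p q \<eta>)) \<le> (\<Sum>(p, q)\<in>?P. ?w p q)"
    unfolding case_prod_unfold by (rule sum_mono) (rule f2)
  ultimately show ?case using prob_sum_le1[OF assms, of \<eta>] by auto
qed

lemma hw_mono: assumes "\<forall>a b. 0 \<le> r a b" "0 \<le> dN"
  shows "hit_within dN r B g n \<eta> \<le> hit_within dN r B g (Suc n) \<eta>"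
proof (induction n arbitrary: \<eta>)
  case 0
  let ?w = "\<lambda>p q. incl_rate dN r p q \<eta> / incl_total_rate dN r \<eta>"
  have w0: "0 \<le> ?w p q" for p q using rate_nonneg[OF assms] total_nonneg[OF assms] by simp
  show ?case using hw_bounds[OF assms] w0 by (auto intro!: sum_nonneg)
next
  case (Suc n)
  let ?w = "\<lambda>p q. incl_rate dN r p q \<eta> / incl_total_rate dN r \<eta>"
  have w0: "0 \<le> ?w p q" for p q using rate_nonneg[OF assms] total_nonneg[OF assms] by simp
  have "(\<Sum>(p, q)\<in>{(p, q). p \<noteq> q}. ?w p q * hit_within dN r B g n (sigma p q \<eta>))
     \<le> (\<Sum>(p, q)\<in>{(p, q). p \<noteq> q}. ?w p q * hit_within dN r B g (Suc n) (sigma p q \<eta>))"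
    unfolding case_prod_unfold by (rule sum_mono) (rule mult_left_mono[OF Suc w0])
  then show ?case
    unfolding hit_within.simps(2)[of dN r B g n \<eta>] hit_within.simps(2)[of dN r B g "Suc n" \<eta>]
    by (simp del: hit_within.simps)
qed

lemma hw_lim: assumes "\<forall>a b. 0 \<le> r a b" "0 \<le> dN"
  shows "(\<lambda>n. hit_within dN r B g n \<eta>) \<longlonglongrightarrow> hit_at_prob dN r B g \<eta>"
proof -
  have "incseq (\<lambda>n. hit_within dN r B g n \<eta>)"
    by (rule incseq_SucI) (rule hw_mono[OF assms])
  then obtain L where "(\<lambda>n. hit_within dN r B g n \<eta>) \<longlonglongrightarrow> L"
    using incseq_convergent[of _ 1] hw_bounds[OF assms] by meson
  then show ?thesis unfolding hit_at_prob_def using convergent_LIMSEQ_iff convergentI by blast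
qed

lemma hap_bounds: assumes "\<forall>a b. 0 \<le> r a b" "0 \<le> dN"
  shows "0 \<le> hit_at_prob dN r B g \<eta> \<and> hit_at_prob dN r B g \<eta> \<le> 1"
  using hw_lim[OF assms] hw_bounds[OF assms]
  by (meson LIMSEQ_le_const LIMSEQ_le_const2)

lemma hap_harmonic: assumes "\<forall>a b. 0 \<le> r a b" "0 \<le> dN" "\<eta> \<notin> B"
  shows "hit_at_prob dN r B g \<eta> = (\<Sum>(p, q)\<in>{(p, q). p \<noteq> q}.
      incl_rate dN r p q \<eta> / incl_total_rate dN r \<eta> * hit_at_prob dN r B g (sigma p q \<eta>))"
proof -
  have "(\<lambda>n. hit_within dN r B g (Suc n) \<eta>) \<longlonglongrightarrow> hit_at_prob dN r B g \<eta>"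
    using LIMSEQ_Suc[OF hw_lim[OF assms(1,2)]] .
  moreover have "(\<lambda>n. hit_within dN r B g (Suc n) \<eta>) \<longlonglongrightarrow> (\<Sum>(p, q)\<in>{(p, q). p \<noteq> q}.
      incl_rate dN r p q \<eta> / incl_total_rate dN r \<eta> * hit_at_prob dN r B g (sigma p q \<eta>))"
    using assms(3) unfolding hit_within.simps(2)[of dN r B g _ \<eta>] case_prod_unfold if_not_P[OF assms(3)]
    by (intro tendsto_sum tendsto_mult tendsto_const hw_lim[OF assms(1,2)])
  ultimately show ?thesis using LIMSEQ_unique by blast
qed

lemma key_alg:
  fixes R rxy ryx u A1 B1 Ot S hp hm T D d1 d2 :: real
  assumes "R = rxy + ryx" "R > 0" "0 \<le> rxy" "0 \<le> ryx" "u > 0"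
    "A1 = u * rxy + d1" "B1 = u * ryx + d2" "0 \<le> d1" "0 \<le> d2" "d1 \<le> D" "d2 \<le> D" "0 \<le> Ot" "Ot \<le> D"
    "0 \<le> S" "S \<le> Ot" "0 \<le> hp" "hp \<le> 1" "0 \<le> hm" "hm \<le> 1" "T = A1 + B1 + Ot"
  shows "\<bar>(A1 * hp + B1 * hm + S) / T - rxy / R * hp - ryx / R * hm\<bar> \<le> 3 * D / (u * R)"
proof -
  have uR: "u * R > 0" using assms by simp
  have T: "T = u * R + (d1 + d2 + Ot)" using assms by (simp add: algebra_simps)
  have Tpos: "T \<ge> u * R" "T > 0" using T assms uR by linarith+
  define a where "a = rxy / R * hp + ryx / R * hm"
  have a0: "0 \<le> a" using assms unfolding a_def by simp
  have a1: "a \<le> 1"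
  proof -
    have "rxy / R * hp \<le> rxy / R" by (rule mult_left_le) (use assms in auto)
    moreover have "ryx / R * hm \<le> ryx / R" by (rule mult_left_le) (use assms in auto)
    ultimately have "a \<le> rxy / R + ryx / R" unfolding a_def by linarith
    also have "\<dots> = 1" using assms by (simp add: add_divide_distrib[symmetric])
    finally show ?thesis .
  qed
  have "(A1 * hp + B1 * hm + S) / T - a = ((d1 * hp + d2 * hm + S) - a * (d1 + d2 + Ot)) / T"
  proof -
    have "u * rxy * hp + u * ryx * hm = a * (u * R)"
      unfolding a_def using assms(2) by (simp add: field_simps)
    then have "A1 * hp + B1 * hm + S - a * T = (d1 * hp + d2 * hm + S) - a * (d1 + d2 + Ot)"
      using assms(6,7) T by (simp add: algebra_simps)
    then show ?thesis using Tpos by (simp add: field_simps)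
  qed
  moreover have "\<bar>(d1 * hp + d2 * hm + S) - a * (d1 + d2 + Ot)\<bar> \<le> 3 * D"
  proof -
    have e1: "0 \<le> d1 * hp + d2 * hm + S" "d1 * hp + d2 * hm + S \<le> 3 * D"
      using assms mult_left_le[of hp d1] mult_left_le[of hm d2] by auto
    have e2: "0 \<le> a * (d1 + d2 + Ot)" "a * (d1 + d2 + Ot) \<le> 3 * D"
    proof -
      have "a * (d1 + d2 + Ot) \<le> d1 + d2 + Ot"
        using assms a0 a1 by (intro mult_left_le_one_le) auto
      then show "0 \<le> a * (d1 + d2 + Ot)" "a * (d1 + d2 + Ot) \<le> 3 * D"
        using assms a0 by auto
    qed
    show ?thesis using e1 e2 by linarith
  qed
  ultimately have "\<bar>(A1 * hp + B1 * hm + S) / T - a\<bar> \<le> 3 * D / T"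
    using Tpos by (simp add: abs_divide divide_right_mono)
  also have "\<dots> \<le> 3 * D / (u * R)"
    using Tpos uR assms by (intro divide_left_mono) auto
  finally show ?thesis unfolding a_def diff_diff_eq .
qed



lemma split2: assumes "finite P" "a \<in> P" "b \<in> P" "a \<noteq> b"
  shows "sum f P = f a + f b + sum f (P - {a, b})"
proof -
  have "sum f P = f a + sum f (P - {a})" using assms by (simp add: sum.remove)
  also have "sum f (P - {a}) = f b + sum f (P - {a} - {b})"
    using assms by (intro sum.remove) auto
  also have "P - {a} - {b} = P - {a, b}" by auto
  finally show ?thesis by (simp add: add.assoc)
qed

theorem lemma4p7:
  fixes r :: "'s::finite \<Rightarrow> 's \<Rightarrow> real" and d :: "nat \<Rightarrow> real"
    and A :: "'s set" and w x y :: 's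
  assumes "\<forall>a b. 0 \<le> r a b" and "\<forall>a. r a a = 0" and "irreducible_rates r"
    and "\<forall>N. 0 < d N" and "d \<longlonglongrightarrow> 0"
    and "A \<noteq> {}" and "w \<in> A"
    and "x \<noteq> y" and "r x y + r y x > 0"
  shows "\<exists>C>0. \<forall>N i. 1 \<le> i \<and> i \<le> N - 1 \<longrightarrow>
     \<bar>E0_prob d r N A w (zeta N i x y)
      - r x y / (r x y + r y x) * E0_prob d r N A w (zeta N (i + 1) x y)
      - r y x / (r x y + r y x) * E0_prob d r N A w (zeta N (i - 1) x y)\<bar>
     \<le> C * (d N * real N / (real i * real (N - i)))"
proof -
  note rnn = assms(1)
  define P :: "('s \<times> 's) set" where "P = {(p, q). p \<noteq> q}"
  define F where "F = P - {(x, y), (y, x)}"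
  define R where "R = r x y + r y x"
  define K where "K = (\<Sum>(p, q)\<in>P. r p q) + 1"
  have finP: "finite P" by simp
  have Rpos: "R > 0" using assms(9) R_def by simp
  have rK: "r p q \<le> K" if "(p, q) \<in> P" for p q
  proof -
    have "r p q \<le> (\<Sum>(p, q)\<in>P. r p q)"
      using member_le_sum[of "(p, q)" P "\<lambda>z. r (fst z) (snd z)"] that rnn
      by (simp add: case_prod_unfold)
    then show ?thesis unfolding K_def by simp
  qed
  have Kpos: "K > 0"
  proof -
    have "0 \<le> (\<Sum>(p, q)\<in>P. r p q)" using rnn by (intro sum_nonneg) auto
    then show ?thesis unfolding K_def by simp
  qed
  have sumF: "(\<Sum>(p, q)\<in>F. r p q) \<le> K"
  proof -
    have "(\<Sum>(p, q)\<in>F. r p q) \<le> (\<Sum>(p, q)\<in>P. r p q)"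
      unfolding case_prod_unfold F_def using rnn by (intro sum_mono2) auto
    then show ?thesis unfolding K_def by simp
  qed
  show ?thesis
  proof (intro exI[of _ "3 * K / R"] conjI allI impI)
    show "0 < 3 * K / R" using Kpos Rpos by simp
  next
    fix N i :: nat
    assume Ni: "1 \<le> i \<and> i \<le> N - 1"
    then have i1: "1 \<le> i" and iN: "i < N" by auto
    define \<eta> where "\<eta> = zeta N i x y"
    define B where "B = xi N ` A"
    define g where "g = xi N w"
    define dN where "dN = d N"
    define h where "h = hit_at_prob dN r B g"
    have dpos: "dN > 0" using assms(4) dN_def by simp
    have \<eta>x: "\<eta> x = N - i" and \<eta>y: "\<eta> y = i" 
      using assms(8) unfolding \<eta>_def zeta_def by auto
    have \<eta>o: "\<eta> z = 0" if "z \<noteq> x" "z \<noteq> y" for z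
      using that unfolding \<eta>_def zeta_def by auto
    have \<eta>le: "\<eta> z \<le> N" for z
      unfolding \<eta>_def zeta_def using iN by auto
    have notB: "\<eta> \<notin> B"
    proof
      assume "\<eta> \<in> B"
      then obtain z where "\<eta> = xi N z" unfolding B_def by auto
      then have "\<eta> x = (if x = z then N else 0)" "\<eta> y = (if y = z then N else 0)"
        unfolding xi_def by auto
      then show False using \<eta>x \<eta>y iN i1 assms(8) by (auto split: if_splits)
    qed
    have sxy: "sigma x y \<eta> = zeta N (i + 1) x y"
      using \<eta>x \<eta>y iN i1 assms(8) unfolding sigma_def zeta_def \<eta>_def
      by (auto simp: fun_eq_iff)
    have syx: "sigma y x \<eta> = zeta N (i - 1) x y"
      using \<eta>x \<eta>y iN i1 assms(8) unfolding sigma_def zeta_def \<eta>_def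
      by (auto simp: fun_eq_iff)
    define rate where "rate = (\<lambda>p q. incl_rate dN r p q \<eta>)"
    define T where "T = incl_total_rate dN r \<eta>"
    define Ot where "Ot = (\<Sum>(p, q)\<in>F. rate p q)"
    define S where "S = (\<Sum>(p, q)\<in>F. rate p q * h (sigma p q \<eta>))"
    define hp where "hp = h (zeta N (i + 1) x y)"
    define hm where "hm = h (zeta N (i - 1) x y)"
    define u where "u = real i * real (N - i)"
    define D where "D = dN * real N * K"
    have inP: "(x, y) \<in> P" "(y, x) \<in> P" "(x, y) \<noteq> (y, x)" using assms(8) P_def by auto
    have rate0: "0 \<le> rate p q" for p q unfolding rate_def using rate_nonneg[OF rnn] dpos by simp
    have hb: "0 \<le> h z \<and> h z \<le> 1" for z unfolding h_def using hap_bounds[OF rnn] dpos by simp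
    have rateF: "rate p q \<le> dN * real N * r p q" if "(p, q) \<in> F" for p q
    proof -
      have rr: "rate p q = real (\<eta> p) * (dN + real (\<eta> q)) * r p q"
        unfolding rate_def incl_rate_def ..
      show ?thesis
      proof (cases "q = x \<or> q = y")
        case True
        then have "p \<noteq> x \<and> p \<noteq> y" using that unfolding F_def P_def by auto
        then show ?thesis using rr \<eta>o rnn dpos by simp
      next
        case False
        then have "rate p q = real (\<eta> p) * dN * r p q" using rr \<eta>o by simp
        also have "\<dots> \<le> real N * dN * r p q"
          using \<eta>le[of p] rnn dpos by (intro mult_right_mono) auto
        finally show ?thesis by (simp add: mult.commute)
      qed
    qed
    have Ot0: "0 \<le> Ot" unfolding Ot_def using rate0 by (intro sum_nonneg) auto
    have OtD: "Ot \<le> D"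
    proof -
      have "Ot \<le> (\<Sum>(p, q)\<in>F. dN * real N * r p q)"
        unfolding Ot_def case_prod_unfold by (rule sum_mono) (use rateF in auto)
      also have "\<dots> = dN * real N * (\<Sum>(p, q)\<in>F. r p q)"
        by (simp add: sum_distrib_left case_prod_unfold)
      also have "\<dots> \<le> D" unfolding D_def using sumF dpos by (intro mult_left_mono) auto
      finally show ?thesis .
    qed
    have S0: "0 \<le> S" unfolding S_def case_prod_unfold using rate0 hb
      by (intro sum_nonneg mult_nonneg_nonneg) auto
    have SO: "S \<le> Ot" unfolding S_def Ot_def case_prod_unfold using rate0 hb
      by (intro sum_mono mult_left_le) auto
    have Tsplit: "T = rate x y + rate y x + Ot"
      unfolding T_def incl_total_rate_def Ot_def F_def rate_def P_def[symmetric]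
      using split2[OF finP inP, of "\<lambda>z. incl_rate dN r (fst z) (snd z) \<eta>"]
      by (simp add: case_prod_unfold)
    have harm: "h \<eta> = (\<Sum>(p, q)\<in>P. rate p q / T * h (sigma p q \<eta>))"
      unfolding h_def rate_def T_def P_def using hap_harmonic[OF rnn _ notB] dpos by simp
    also have "\<dots> = (\<Sum>(p, q)\<in>P. rate p q * h (sigma p q \<eta>)) / T"
      by (simp add: sum_divide_distrib case_prod_unfold)
    also have "(\<Sum>(p, q)\<in>P. rate p q * h (sigma p q \<eta>)) = rate x y * hp + rate y x * hm + S"
      unfolding S_def F_def hp_def hm_def sxy[symmetric] syx[symmetric]
      using split2[OF finP inP, of "\<lambda>z. rate (fst z) (snd z) * h (sigma (fst z) (snd z) \<eta>)"]
      by (simp add: case_prod_unfold)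
    finally have hform: "h \<eta> = (rate x y * hp + rate y x * hm + S) / T" .
    have rxy: "rate x y = u * r x y + dN * real (N - i) * r x y"
      unfolding rate_def incl_rate_def u_def using \<eta>x \<eta>y by (simp add: algebra_simps)
    have ryx: "rate y x = u * r y x + dN * real i * r y x"
      unfolding rate_def incl_rate_def u_def using \<eta>x \<eta>y by (simp add: algebra_simps)
    have upos: "u > 0" unfolding u_def using i1 iN by simp
    have d1: "dN * real (N - i) * r x y \<le> D"
    proof -
      have "dN * real (N - i) * r x y \<le> dN * real N * K"
        using rK[OF inP(1)] rnn dpos by (intro mult_mono) (auto intro!: mult_left_mono)
      then show ?thesis unfolding D_def .
    qed
    have d2: "dN * real i * r y x \<le> D"
    proof -
      have "dN * real i * r y x \<le> dN * real N * K"
        using rK[OF inP(2)] rnn dpos iN by (intro mult_mono) (auto intro!: mult_left_mono)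
      then show ?thesis unfolding D_def .
    qed
    have main: "\<bar>(rate x y * hp + rate y x * hm + S) / T - r x y / R * hp - r y x / R * hm\<bar> \<le> 3 * D / (u * R)"
      by (rule key_alg[OF R_def Rpos _ _ upos rxy ryx _ _ d1 d2 Ot0 OtD S0 SO _ _ _ _ Tsplit])
         (use rnn dpos hb hp_def hm_def in auto)
    have "3 * D / (u * R) = 3 * K / R * (d N * real N / (real i * real (N - i)))"
      unfolding D_def u_def dN_def by (simp add: field_simps)
    moreover have "E0_prob d r N A w (zeta N i x y) = h \<eta>"
      "E0_prob d r N A w (zeta N (i + 1) x y) = hp"
      "E0_prob d r N A w (zeta N (i - 1) x y) = hm"
      unfolding E0_prob_def h_def hp_def hm_def \<eta>_def dN_def B_def g_def by simp_all
    ultimately show "\<bar>E0_prob d r N A w (zeta N i x y)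
      - r x y / (r x y + r y x) * E0_prob d r N A w (zeta N (i + 1) x y)
      - r y x / (r x y + r y x) * E0_prob d r N A w (zeta N (i - 1) x y)\<bar>
     \<le> 3 * K / R * (d N * real N / (real i * real (N - i)))"
      using main hform R_def by simp
  qed
qed

end
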